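(* Let $f(x)\in\mathbb{Z}[x]$ be a $0,1$-polynomial with $f(0)=1$ such that $f(x)$ is divisible by the product of two non-reciprocal irreducible polynomials in $\mathbb{Z}[x]$ (not necessarily distinct). Then there is a $0,1$-polynomial $g(x)$ with the same number of (nonzero) terms as $f(x)$, with $g(x)\notin\{f(x),\tilde f(x)\}$, satisfying $$f(x)\tilde f(x) = g(x)\tilde g(x).$$
   Context: A $0,1$-polynomial is a polynomial each of whose coefficients is $0$ or $1$. For nonzero $f(x)\in\mathbb{R}[x]$, $\tilde f(x)=x^{\deg f}f(1/x)$; $f$ is reciprocal if $f=\pm\tilde f$, and non-reciprocal otherwise. *)

theory Defs
  imports "HOL-Computational_Algebra.Computational_Algebra"
begin

abbreviation tilde :: "int poly \<Rightarrow> int poly" where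
  "tilde f \<equiv> reflect_poly f"

definition zero_one_poly :: "int poly \<Rightarrow> bool" where
  "zero_one_poly f \<longleftrightarrow> (\<forall>i. coeff f i \<in> {0, 1})"

definition reciprocal :: "int poly \<Rightarrow> bool" where
  "reciprocal f \<longleftrightarrow> f \<noteq> 0 \<and> (f = reflect_poly f \<or> f = - reflect_poly f)"

definition non_reciprocal :: "int poly \<Rightarrow> bool" where
  "non_reciprocal f \<longleftrightarrow> f \<noteq> 0 \<and> \<not> reciprocal f"

definition num_terms :: "int poly \<Rightarrow> nat" where
  "num_terms f = card {i. coeff f i \<noteq> 0}"

end

theory Submission
  imports Defs
begin

lemma sum_rev_atMost: "(\<Sum>i\<le>d. (g::nat\<Rightarrow>int) (d - i)) = (\<Sum>i\<le>d. g i)"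
  by (rule sum.reindex_bij_witness[where i="\<lambda>i. d - i" and j="\<lambda>i. d - i"]) auto

lemma poly1_reflect:
  fixes p :: "int poly"
  assumes "coeff p 0 \<noteq> 0"
  shows "poly (reflect_poly p) 1 = poly p 1"
proof -
  have "poly (reflect_poly p) 1 = (\<Sum>i\<le>degree p. coeff p (degree p - i))"
    using assms by (simp add: poly_altdef coeff_reflect_poly)
  also have "\<dots> = poly p 1" by (simp add: poly_altdef sum_rev_atMost)
  finally show ?thesis .
qed

lemma mid_coeff:
  fixes p :: "int poly"
  shows "coeff (p * reflect_poly p) (degree p) = (\<Sum>i\<le>degree p. (coeff p i)^2)"
proof -
  have "coeff (p * reflect_poly p) (degree p) = (\<Sum>i\<le>degree p. coeff p i * coeff (reflect_poly p) (degree p - i))"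
    by (simp add: coeff_mult)
  also have "\<dots> = (\<Sum>i\<le>degree p. (coeff p i)^2)"
    by (rule sum.cong) (auto simp: coeff_reflect_poly power2_eq_square)
  finally show ?thesis .
qed

lemma num_terms_sum:
  fixes p :: "int poly"
  assumes "\<And>i. coeff p i \<in> {-1,0,1}"
  shows "int (num_terms p) = (\<Sum>i\<le>degree p. (coeff p i)^2)"
proof -
  have sub: "{i. coeff p i \<noteq> 0} \<subseteq> {..degree p}"
    using le_degree by auto
  have "(\<Sum>i\<le>degree p. (coeff p i)^2) = (\<Sum>i\<in>{..degree p}. if coeff p i \<noteq> 0 then 1 else 0)"
  proof (rule sum.cong)
    fix i show "(coeff p i)^2 = (if coeff p i \<noteq> 0 then 1 else 0)"
      using assms[of i] by auto
  qed simp
  also have "\<dots> = int (card ({..degree p} \<inter> {i. coeff p i \<noteq> 0}))"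
    by (simp add: sum.If_cases)
  also have "{..degree p} \<inter> {i. coeff p i \<noteq> 0} = {i. coeff p i \<noteq> 0}" using sub by blast
  finally show ?thesis by (simp add: num_terms_def)
qed

lemma sum_sq_zero:
  fixes c :: "nat \<Rightarrow> int"
  assumes "(\<Sum>i\<le>d. c i) = (\<Sum>i\<le>d. (c i)^2)"
  shows "\<forall>i\<le>d. c i \<in> {0,1}"
proof -
  have nn: "\<And>i. (c i)^2 - c i \<ge> 0"
  proof -
    fix i
    show "(c i)^2 - c i \<ge> 0"
    proof (cases "c i \<le> 0")
      case True then show ?thesis by (smt (verit) zero_le_power2)
    next
      case False then have "c i \<ge> 1" by simp
      then have "c i * 1 \<le> c i * c i" by (intro mult_left_mono) auto
      then show ?thesis by (simp add: power2_eq_square)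
    qed
  qed
  have "(\<Sum>i\<le>d. (c i)^2 - c i) = 0" using assms by (simp add: sum_subtractf)
  then have z: "\<forall>i\<in>{..d}. (c i)^2 - c i = 0"
    using sum_nonneg_eq_0_iff[of "{..d}" "\<lambda>i. (c i)^2 - c i"] nn by auto
  show ?thesis
  proof (intro allI impI)
    fix i assume "i \<le> d"
    then have "c i * (c i - 1) = 0" using z by (auto simp: power2_eq_square algebra_simps)
    then show "c i \<in> {0,1}" by auto
  qed
qed

lemma key_A:
  fixes f h :: "int poly"
  assumes f01: "zero_one_poly f" and f0: "coeff f 0 \<noteq> 0" and h0: "coeff h 0 \<noteq> 0"
    and eq: "h * reflect_poly h = f * reflect_poly f"
  shows "(zero_one_poly h \<or> zero_one_poly (-h)) \<and> num_terms h = num_terms f"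
proof -
  have fnz: "f \<noteq> 0" and hnz: "h \<noteq> 0" using f0 h0 by auto
  have "degree (h * reflect_poly h) = degree (f * reflect_poly f)" using eq by simp
  then have dd: "degree h = degree f" using f0 h0 fnz hnz by (simp add: degree_mult_eq)
  define d where "d = degree f"
  have Q: "(\<Sum>i\<le>d. (coeff h i)^2) = (\<Sum>i\<le>d. (coeff f i)^2)"
    using mid_coeff[of h] mid_coeff[of f] eq dd d_def by simp
  have fsq: "(\<Sum>i\<le>d. (coeff f i)^2) = (\<Sum>i\<le>d. coeff f i)"
    by (rule sum.cong) (use f01 in \<open>auto simp: zero_one_poly_def power2_eq_square\<close>)
  have "poly (h * reflect_poly h) 1 = poly (f * reflect_poly f) 1" using eq by simp
  then have "(poly h 1)^2 = (poly f 1)^2" using poly1_reflect[OF f0] poly1_reflect[OF h0]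
    by (simp add: power2_eq_square)
  then have "poly h 1 = poly f 1 \<or> poly h 1 = - poly f 1" by (simp add: power2_eq_iff)
  moreover have ph: "poly h 1 = (\<Sum>i\<le>d. coeff h i)" using dd d_def by (simp add: poly_altdef)
  moreover have pf: "poly f 1 = (\<Sum>i\<le>d. coeff f i)" using d_def by (simp add: poly_altdef)
  ultimately consider "(\<Sum>i\<le>d. coeff h i) = (\<Sum>i\<le>d. (coeff h i)^2)"
    | "(\<Sum>i\<le>d. coeff (-h) i) = (\<Sum>i\<le>d. (coeff (-h) i)^2)"
    using Q fsq by (auto simp: sum_negf)
  then have c: "(\<forall>i\<le>d. coeff h i \<in> {0,1}) \<or> (\<forall>i\<le>d. coeff (-h) i \<in> {0,1})"
  proof cases
    case 1 then show ?thesis using sum_sq_zero[of "coeff h" d] by blast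
  next
    case 2 then show ?thesis using sum_sq_zero[of "coeff (-h)" d] by blast
  qed
  have hi: "\<And>i. i > d \<Longrightarrow> coeff h i = 0" using dd d_def by (simp add: coeff_eq_0)
  have z: "zero_one_poly h \<or> zero_one_poly (-h)"
    using c
  proof
    assume a: "\<forall>i\<le>d. coeff h i \<in> {0, 1}"
    have "\<forall>i. coeff h i \<in> {0, 1}"
    proof
      fix i show "coeff h i \<in> {0, 1}" using a hi[of i] by (cases "i \<le> d") auto
    qed
    then show ?thesis by (simp add: zero_one_poly_def)
  next
    assume a: "\<forall>i\<le>d. coeff (-h) i \<in> {0, 1}"
    have "\<forall>i. coeff (-h) i \<in> {0, 1}"
    proof
      fix i show "coeff (-h) i \<in> {0, 1}" using a hi[of i] by (cases "i \<le> d") auto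
    qed
    then show ?thesis by (simp add: zero_one_poly_def)
  qed
  have "\<And>i. coeff h i \<in> {-1,0,1}"
  proof -
    fix i
    from z show "coeff h i \<in> {-1,0,1}" unfolding zero_one_poly_def
    proof
      assume "\<forall>i. coeff h i \<in> {0, 1}" then show ?thesis by auto
    next
      assume "\<forall>i. coeff (-h) i \<in> {0, 1}" then have "- coeff h i \<in> {0,1}" by simp
      then show ?thesis by auto
    qed
  qed
  then have "int (num_terms h) = (\<Sum>i\<le>d. (coeff h i)^2)" using num_terms_sum dd d_def by simp
  moreover have "\<And>i. coeff f i \<in> {-1,0,1}" using f01 unfolding zero_one_poly_def by auto
  then have "int (num_terms f) = (\<Sum>i\<le>d. (coeff f i)^2)" using num_terms_sum d_def by simp
  ultimately show ?thesis using z Q by simp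
qed


lemma combi:
  fixes a b c A B C :: "'a::linordered_idom"
  assumes nz: "a \<noteq> 0" "b \<noteq> 0" "c \<noteq> 0" "A \<noteq> 0" "B \<noteq> 0" "C \<noteq> 0"
    and cC: "c \<ge> 0" "C \<ge> 0"
    and aA: "A \<noteq> a" and bB: "B \<noteq> b"
    and g1: "A*b*c = a*b*c \<or> A*b*c = A*B*C"
    and g2: "a*B*c = a*b*c \<or> a*B*c = A*B*C"
    and g3: "A*B*c = a*b*c \<or> A*B*c = A*B*C"
  shows False
proof -
  have h1: "b*c = B*C" using g1 aA nz by auto
  have h2: "a*c = A*C" using g2 bB nz by auto
  from g3 show False
  proof
    assume e: "A*B*c = a*b*c"
    then have e': "A*B = a*b" using nz by auto
    have "(a*b)*(c*c) = (b*c)*(a*c)" by (simp add: algebra_simps)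
    also have "\<dots> = (A*B)*(C*C)" using h1 h2 by (simp add: algebra_simps)
    finally have "c*c = C*C" using e' nz by simp
    then have "c = C" using cC by (metis power2_eq_iff_nonneg power2_eq_square)
    then show False using h1 bB nz by simp
  next
    assume "A*B*c = A*B*C"
    then have "c = C" using nz by simp
    then show False using h1 bB nz by simp
  qed
qed

lemma reflect_neg: "reflect_poly (- p) = - reflect_poly (p::int poly)"
  by (rule poly_eqI) (simp add: coeff_reflect_poly)

lemma sq_mem:
  fixes x f g :: "int poly"
  shows "x \<in> {f, -f, g, -g} \<longleftrightarrow> x^2 = f^2 \<or> x^2 = g^2"
  by (auto simp: power2_eq_iff)

lemma nonrec_sq:
  assumes "non_reciprocal u"
  shows "(reflect_poly u)^2 \<noteq> u^2"
  using assms unfolding non_reciprocal_def reciprocal_def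
  by (auto simp: power2_eq_iff)

theorem lemma2:
  fixes f :: "int poly"
  assumes "zero_one_poly f"
    and "coeff f 0 = 1"
    and "\<exists>u v :: int poly. irreducible u \<and> irreducible v \<and>
           non_reciprocal u \<and> non_reciprocal v \<and> u * v dvd f"
  shows "\<exists>g :: int poly. zero_one_poly g \<and> num_terms g = num_terms f \<and>
           g \<notin> {f, reflect_poly f} \<and> f * reflect_poly f = g * reflect_poly g"
proof -
  obtain u v where nu: "non_reciprocal u" and nv: "non_reciprocal v" and d: "u * v dvd f"
    using assms(3) by blast
  obtain w where fw: "f = u * v * w" using d by (auto elim: dvdE)
  have "coeff u 0 * coeff v 0 * coeff w 0 = 1" using assms(2) fw by (simp add: coeff_mult_0)
  then have u0: "coeff u 0 \<noteq> 0" and v0: "coeff v 0 \<noteq> 0" and w0: "coeff w 0 \<noteq> 0" by auto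
  then have unz: "u \<noteq> 0" and vnz: "v \<noteq> 0" and wnz: "w \<noteq> 0" by auto
  define r :: "int poly \<Rightarrow> int poly" where "r = reflect_poly"
  have rf: "r f = r u * r v * r w" unfolding r_def fw by (simp add: reflect_poly_mult)
  have rr: "r (r u) = u" "r (r v) = v" "r (r w) = w" using u0 v0 w0 unfolding r_def by auto
  have rm: "\<And>p q. r (p * q) = r p * r q" unfolding r_def by (simp add: reflect_poly_mult)
  define g1 where "g1 = r u * v * w"
  define g2 where "g2 = u * r v * w"
  define g3 where "g3 = r u * r v * w"
  have e1: "g1 * r g1 = f * r f" unfolding g1_def rf fw by (simp add: rm rr algebra_simps)
  have e2: "g2 * r g2 = f * r f" unfolding g2_def rf fw by (simp add: rm rr algebra_simps)
  have e3: "g3 * r g3 = f * r f" unfolding g3_def rf fw by (simp add: rm rr algebra_simps)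
  have z1: "coeff g1 0 \<noteq> 0" unfolding g1_def r_def using u0 v0 w0 unz vnz by (simp add: coeff_mult_0)
  have z2: "coeff g2 0 \<noteq> 0" unfolding g2_def r_def using u0 v0 w0 unz vnz by (simp add: coeff_mult_0)
  have z3: "coeff g3 0 \<noteq> 0" unfolding g3_def r_def using u0 v0 w0 unz vnz by (simp add: coeff_mult_0)
  have "\<exists>h\<in>{g1,g2,g3}. h \<notin> {f, -f, r f, - r f}"
  proof (rule ccontr)
    assume "\<not> ?thesis"
    then have b1: "g1^2 = f^2 \<or> g1^2 = (r f)^2" and b2: "g2^2 = f^2 \<or> g2^2 = (r f)^2"
      and b3: "g3^2 = f^2 \<or> g3^2 = (r f)^2"
      unfolding sq_mem[symmetric] by blast+
    have ru: "r u \<noteq> 0" "r v \<noteq> 0" "r w \<noteq> 0" using unz vnz wnz unfolding r_def by auto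
    have fsq: "f^2 = u^2 * v^2 * w^2" unfolding fw by (simp only: power_mult_distrib)
    have rfsq: "(r f)^2 = (r u)^2 * (r v)^2 * (r w)^2" unfolding rf by (simp only: power_mult_distrib)
    show False
    proof (rule combi[of "u^2" "v^2" "w^2" "(r u)^2" "(r v)^2" "(r w)^2"])
      show "(r u)^2 \<noteq> u^2" using nonrec_sq[OF nu] r_def by simp
      show "(r v)^2 \<noteq> v^2" using nonrec_sq[OF nv] r_def by simp
      show "(r u)^2 * v^2 * w^2 = u^2 * v^2 * w^2 \<or> (r u)^2 * v^2 * w^2 = (r u)^2 * (r v)^2 * (r w)^2"
        using b1 unfolding g1_def fsq rfsq by (simp only: power_mult_distrib)
      show "u^2 * (r v)^2 * w^2 = u^2 * v^2 * w^2 \<or> u^2 * (r v)^2 * w^2 = (r u)^2 * (r v)^2 * (r w)^2"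
        using b2 unfolding g2_def fsq rfsq by (simp only: power_mult_distrib)
      show "(r u)^2 * (r v)^2 * w^2 = u^2 * v^2 * w^2 \<or> (r u)^2 * (r v)^2 * w^2 = (r u)^2 * (r v)^2 * (r w)^2"
        using b3 unfolding g3_def fsq rfsq by (simp only: power_mult_distrib)
    qed (use unz vnz wnz ru in auto)
  qed
  then obtain h where hne: "h \<notin> {f, -f, r f, - r f}" and
    he: "h * r h = f * r f" and h0: "coeff h 0 \<noteq> 0"
    using e1 e2 e3 z1 z2 z3 by blast
  have f0: "coeff f 0 \<noteq> 0" using assms(2) by simp
  from key_A[OF assms(1) f0 h0 he[unfolded r_def]]
  have A: "zero_one_poly h \<or> zero_one_poly (- h)" and nt: "num_terms h = num_terms f" by auto
  have ntm: "num_terms (-h) = num_terms h" by (simp add: num_terms_def)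
  show ?thesis
  proof (cases "zero_one_poly h")
    case True
    then show ?thesis using nt hne he unfolding r_def by (intro exI[of _ h]) auto
  next
    case False
    then have "zero_one_poly (-h)" using A by simp
    then show ?thesis using nt ntm hne he unfolding r_def
      by (intro exI[of _ "-h"]) (auto simp: reflect_neg)
  qed
qed

end
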